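(* Consider the system (P) described in the context, and its constant (spatially homogeneous, time-independent) nonnegative steady states $(U,V)$. Then: (i) if $b\le0$, the only such steady state is $E_0=(0,0)$; (ii) if $b>0$ and $\frac{b\beta}{\alpha d e^{\alpha\tau}}\le1$, the constant steady states are $E_0=(0,0)$ and $E_1=(b/d,0)$; (iii) if $\frac{b\beta}{\alpha d e^{\alpha\tau}}>1$, then besides $E_0=(0,0)$ and $E_1=(b/d,0)$ there is a unique constant steady state $E_3=(U_3,V_3)$ with $U_3>0$ and $V_3>0$.
   Context: Let $\alpha,\beta,d,h>0$, $\kappa>0$, $d_1,d_2>0$, $\tau>0$ be constants and $b\in\mathbb{R}$. Let $\Gamma(x,y,a)$, $x,y\in[0,\pi]$, $a>0$, be the Green's function of $\partial_aW=d_2\partial_{xx}W-\alpha W$ on $(0,\pi)$ with Neumann conditions $\partial_xW(a,0)=\partial_xW(a,\pi)=0$ (so $\int_0^\pi\Gamma(x,y,a)\,dy=e^{-\alpha a}$). System (P): for $t>0$, $x\in(0,\pi)$, $\partial_tU=d_1\partial_{xx}U-\frac{\beta UV}{1+hV}+U\Big[b-dU-\frac{\beta}{\kappa}\int_0^\tau\int_0^\pi\Gamma(x,y,a)\frac{U(t-a,y)V(t-a,y)}{1+hV(t-a,y)}\,dy\,da\Big]$, $\partial_tV=d_2\partial_{xx}V-\alpha V+\beta\int_0^\pi\Gamma(x,y,\tau)\frac{U(t-\tau,y)V(t-\tau,y)}{1+hV(t-\tau,y)}\,dy$, with $\partial_xU=\partial_xV=0$ at $x=0,\pi$. *)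

theory Defs
  imports "HOL-Analysis.Analysis"
begin

definition incid :: "real \<Rightarrow> real \<Rightarrow> real \<Rightarrow> real" where
  "incid h U V = U * V / (1 + h * V)"

text \<open>(U,V) is a constant (spatially homogeneous, time-independent) nonnegative steady state
  of system (P) with kernel Gamma: the constant functions U(t,x)=U, V(t,x)=V satisfy both
  equations (time derivatives and second x-derivatives of constants vanish, Neumann
  conditions hold trivially) at every x in (0,pi).\<close>
definition const_steady_state ::
  "(real \<Rightarrow> real \<Rightarrow> real \<Rightarrow> real) \<Rightarrow> real \<Rightarrow> real \<Rightarrow> real \<Rightarrow> real \<Rightarrow> real \<Rightarrow> real \<Rightarrow> real
   \<Rightarrow> real \<Rightarrow> real \<Rightarrow> bool" where
  "const_steady_state \<Gamma> \<alpha> \<beta> d h \<kappa> b \<tau> U V \<longleftrightarrow>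
     U \<ge> 0 \<and> V \<ge> 0 \<and>
     (\<forall>x\<in>{0<..<pi}.
        0 = - \<beta> * incid h U V
            + U * (b - d * U - \<beta> / \<kappa> *
                integral {0..\<tau>} (\<lambda>a. integral {0..pi} (\<lambda>y. \<Gamma> x y a * incid h U V))) \<and>
        0 = - \<alpha> * V + \<beta> * integral {0..pi} (\<lambda>y. \<Gamma> x y \<tau> * incid h U V))"

end

theory Submission
  imports Defs
begin

lemma outer_int:
  fixes \<Gamma> :: "real \<Rightarrow> real \<Rightarrow> real \<Rightarrow> real" and \<alpha> \<tau> I x :: real
  assumes "\<alpha> > 0" "\<tau> > 0" "x \<in> {0..pi}"
    and Gamma_int: "\<And>x a. x \<in> {0..pi} \<Longrightarrow> a > 0 \<Longrightarrow>
                      ((\<lambda>y. \<Gamma> x y a) has_integral exp (- \<alpha> * a)) {0..pi}"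
  shows "integral {0..\<tau>} (\<lambda>a. integral {0..pi} (\<lambda>y. \<Gamma> x y a * I)) = I * (1 - exp (- \<alpha> * \<tau>)) / \<alpha>"
proof -
  have inner: "integral {0..pi} (\<lambda>y. \<Gamma> x y a * I) = exp (- \<alpha> * a) * I" if "a > 0" for a
    by (rule integral_unique[OF has_integral_mult_left[OF Gamma_int[OF assms(3) that]]])
  have "integral {0..\<tau>} (\<lambda>a. integral {0..pi} (\<lambda>y. \<Gamma> x y a * I)) = integral {0..\<tau>} (\<lambda>a. exp (- \<alpha> * a) * I)"
    by (rule integral_spike[of "{0}"]) (simp, subst inner, auto)
  also have "\<dots> = (- exp (- \<alpha> * \<tau>) * I / \<alpha>) - (- exp (- \<alpha> * 0) * I / \<alpha>)"
  proof (rule integral_unique, rule fundamental_theorem_of_calculus)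
    show "0 \<le> \<tau>" using assms by simp
    fix a :: real
    have "((\<lambda>a. - exp (- \<alpha> * a) * I / \<alpha>) has_real_derivative exp (- \<alpha> * a) * I) (at a within {0..\<tau>})"
      using assms(1) by (auto intro!: derivative_eq_intros simp: field_simps)
    then show "((\<lambda>a. - exp (- \<alpha> * a) * I / \<alpha>) has_vector_derivative exp (- \<alpha> * a) * I) (at a within {0..\<tau>})"
      by (simp add: has_real_derivative_iff_has_vector_derivative)
  qed
  also have "\<dots> = I * (1 - exp (- \<alpha> * \<tau>)) / \<alpha>" using assms(1) by (simp add: field_simps)
  finally show ?thesis .
qed

lemma alg:
  fixes \<alpha> \<beta> d h \<kappa> b E U V :: real
  assumes pos: "\<alpha> > 0" "\<beta> > 0" "d > 0" "h > 0" "\<kappa> > 0" "E \<ge> 1"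
  defines "I \<equiv> U * V / (1 + h * V)"
  defines "c \<equiv> \<alpha> * E / \<beta>"
  defines "F \<equiv> (\<lambda>V. b - d * c * (1 + h * V) - \<beta> * V / (1 + h * V) - (E - 1) * V / \<kappa>)"
  shows "(U \<ge> 0 \<and> V \<ge> 0 \<and> 0 = - \<beta> * I + U * (b - d * U - \<beta> / \<kappa> * (I * (1 - 1 / E) / \<alpha>))
          \<and> 0 = - \<alpha> * V + \<beta> * (I / E))
     \<longleftrightarrow> (U = 0 \<and> V = 0) \<or> (V = 0 \<and> b > 0 \<and> U = b / d) \<or> (V > 0 \<and> F V = 0 \<and> U = c * (1 + h * V))"
    (is "?L \<longleftrightarrow> ?R")
proof (cases "U > 0 \<and> V > 0")
  case True
  have hv: "1 + h * V > 0" using True pos by (simp add: add_pos_nonneg)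
  have E0: "E > 0" using pos by simp
  have "\<beta> * (I / E) = (\<beta> * U * V) / (E * (1 + h * V))" unfolding I_def by (simp add: mult_ac)
  then have "0 = - \<alpha> * V + \<beta> * (I / E) \<longleftrightarrow> \<alpha> * V = (\<beta> * U * V) / (E * (1 + h * V))" by linarith
  also have "\<dots> \<longleftrightarrow> \<alpha> * V * (E * (1 + h * V)) = \<beta> * U * V"
    using hv E0 by (simp add: eq_divide_eq)
  also have "\<dots> \<longleftrightarrow> \<alpha> * V * E * (1 + h * V) = \<beta> * U * V" by (simp add: mult.assoc)
  also have "\<dots> \<longleftrightarrow> V * (\<alpha> * E * (1 + h * V)) = V * (\<beta> * U)" by (simp add: mult_ac)
  also have "\<dots> \<longleftrightarrow> \<alpha> * E * (1 + h * V) = \<beta> * U" using True by simp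
  also have "\<dots> \<longleftrightarrow> U = c * (1 + h * V)"
    unfolding c_def using pos by (auto simp: field_simps)
  finally have e2: "0 = - \<alpha> * V + \<beta> * (I / E) \<longleftrightarrow> U = c * (1 + h * V)" .
  have e1: "0 = - \<beta> * I + U * (b - d * U - \<beta> / \<kappa> * (I * (1 - 1 / E) / \<alpha>)) \<longleftrightarrow> F V = 0"
    if U: "U = c * (1 + h * V)"
  proof -
    have IcV: "I = c * V" unfolding I_def U using hv by simp
    have "0 = - \<beta> * I + U * (b - d * U - \<beta> / \<kappa> * (I * (1 - 1 / E) / \<alpha>)) \<longleftrightarrow>
          0 = U * (- \<beta> * V / (1 + h * V) + b - d * U - \<beta> / \<kappa> * (c * V * (1 - 1 / E) / \<alpha>))"
    proof -
      have a: "- \<beta> * I = U * (- \<beta> * V / (1 + h * V))" unfolding I_def by simp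
      show ?thesis unfolding a unfolding IcV by (simp only: ring_distribs) (simp, linarith)
    qed
    also have "\<dots> \<longleftrightarrow> 0 = - \<beta> * V / (1 + h * V) + b - d * U - \<beta> / \<kappa> * (c * V * (1 - 1 / E) / \<alpha>)"
      using True by simp
    also have "\<beta> / \<kappa> * (c * V * (1 - 1 / E) / \<alpha>) = (E - 1) * V / \<kappa>"
      unfolding c_def using pos E0 by (simp add: field_simps)
    finally show ?thesis unfolding F_def U by (auto simp: algebra_simps)
  qed
  show ?thesis using True e1 e2 by auto
next
  case False
  show ?thesis
  proof
    assume L: ?L
    show ?R
    proof (cases "U = 0")
      case True
      then have "V = 0" using L pos unfolding I_def by simp
      then show ?thesis using True by simp
    next
      case U0: False
      then have V0: "V = 0" using False L by auto
      then have "0 = U * (b - d * U)" using L unfolding I_def by simp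
      then have "U = b / d" using U0 pos by (auto simp: field_simps)
      moreover have "b > 0" using U0 L \<open>U = b / d\<close> pos by (auto simp: field_simps)
      ultimately show ?thesis using V0 by simp
    qed
  next
    assume ?R
    moreover have "c > 0" unfolding c_def using pos by simp
    ultimately consider "U = 0 \<and> V = 0" | "V = 0 \<and> b > 0 \<and> U = b / d" using False pos
      by (metis add_pos_pos mult_pos_pos zero_less_one)
    then show ?L
    proof cases
      case 1 then show ?thesis unfolding I_def by simp
    next
      case 2
      then have "d * U = b" using pos by simp
      then show ?thesis using 2 pos unfolding I_def by simp
    qed
  qed
qed

lemma F_mono:
  fixes \<beta> h \<kappa> E dc b x y :: real
  assumes "\<beta> > 0" "dc > 0" "h > 0" "\<kappa> > 0" "E \<ge> 1" "0 \<le> x" "x < y"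
  shows "b - dc * (1 + h * y) - \<beta> * y / (1 + h * y) - (E - 1) * y / \<kappa>
       < b - dc * (1 + h * x) - \<beta> * x / (1 + h * x) - (E - 1) * x / \<kappa>"
proof -
  have hx: "1 + h * x > 0" "1 + h * y > 0" using assms by (auto simp: add_pos_nonneg)
  have "x / (1 + h * x) \<le> y / (1 + h * y)"
    using hx assms by (simp add: divide_simps algebra_simps)
  then have a: "\<beta> * x / (1 + h * x) \<le> \<beta> * y / (1 + h * y)"
    using assms(1) by (metis mult_left_mono less_imp_le times_divide_eq_right)
  have b: "(E - 1) * x / \<kappa> \<le> (E - 1) * y / \<kappa>"
    using assms by (intro divide_right_mono mult_left_mono) auto
  have c: "dc * (1 + h * x) < dc * (1 + h * y)" using assms by simp
  show ?thesis using a b c by linarith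
qed


lemma css_iff:
  fixes \<Gamma> :: "real \<Rightarrow> real \<Rightarrow> real \<Rightarrow> real"
    and \<alpha> \<beta> d h \<kappa> \<tau> b U V :: real
  assumes pos: "\<alpha> > 0" "\<tau> > 0"
    and Gamma_int: "\<And>x a. x \<in> {0..pi} \<Longrightarrow> a > 0 \<Longrightarrow>
                      ((\<lambda>y. \<Gamma> x y a) has_integral exp (- \<alpha> * a)) {0..pi}"
  shows "const_steady_state \<Gamma> \<alpha> \<beta> d h \<kappa> b \<tau> U V \<longleftrightarrow>
    (U \<ge> 0 \<and> V \<ge> 0 \<and> 0 = - \<beta> * (U * V / (1 + h * V)) + U * (b - d * U - \<beta> / \<kappa> * ((U * V / (1 + h * V)) * (1 - 1 / exp (\<alpha> * \<tau>)) / \<alpha>))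
          \<and> 0 = - \<alpha> * V + \<beta> * ((U * V / (1 + h * V)) / exp (\<alpha> * \<tau>)))"
proof -
  define I where "I = U * V / (1 + h * V)"
  have em: "exp (- \<alpha> * \<tau>) = 1 / exp (\<alpha> * \<tau>)" by (simp add: exp_minus field_simps)
  have X: "integral {0..\<tau>} (\<lambda>a. integral {0..pi} (\<lambda>y. \<Gamma> x y a * I)) = I * (1 - 1 / exp (\<alpha> * \<tau>)) / \<alpha>
       \<and> integral {0..pi} (\<lambda>y. \<Gamma> x y \<tau> * I) = I / exp (\<alpha> * \<tau>)"
    if "x \<in> {0<..<pi}" for x
  proof
    have x: "x \<in> {0..pi}" using that by auto
    show "integral {0..\<tau>} (\<lambda>a. integral {0..pi} (\<lambda>y. \<Gamma> x y a * I)) = I * (1 - 1 / exp (\<alpha> * \<tau>)) / \<alpha>"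
      using outer_int[OF pos x Gamma_int] em by simp
    show "integral {0..pi} (\<lambda>y. \<Gamma> x y \<tau> * I) = I / exp (\<alpha> * \<tau>)"
    proof -
      have "integral {0..pi} (\<lambda>y. \<Gamma> x y \<tau> * I) = exp (- \<alpha> * \<tau>) * I"
        by (rule integral_unique[OF has_integral_mult_left[OF Gamma_int[OF x pos(2)]]])
      also have "\<dots> = I / exp (\<alpha> * \<tau>)" using em by simp
      finally show ?thesis .
    qed
  qed
  have ne: "pi / 2 \<in> {0<..<pi}" using pi_gt_zero by simp
  let ?P = "0 = - \<beta> * I + U * (b - d * U - \<beta> / \<kappa> * (I * (1 - 1 / exp (\<alpha> * \<tau>)) / \<alpha>))
          \<and> 0 = - \<alpha> * V + \<beta> * (I / exp (\<alpha> * \<tau>))"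
  have "(\<forall>x\<in>{0<..<pi}.
        0 = - \<beta> * I
            + U * (b - d * U - \<beta> / \<kappa> *
                integral {0..\<tau>} (\<lambda>a. integral {0..pi} (\<lambda>y. \<Gamma> x y a * I))) \<and>
        0 = - \<alpha> * V + \<beta> * integral {0..pi} (\<lambda>y. \<Gamma> x y \<tau> * I)) \<longleftrightarrow> (\<forall>x\<in>{0<..<pi}. ?P)"
  proof (rule ball_cong)
    fix x assume "x \<in> {0<..<pi}"
    from X[OF this] show "(0 = - \<beta> * I
            + U * (b - d * U - \<beta> / \<kappa> *
                integral {0..\<tau>} (\<lambda>a. integral {0..pi} (\<lambda>y. \<Gamma> x y a * I))) \<and>
        0 = - \<alpha> * V + \<beta> * integral {0..pi} (\<lambda>y. \<Gamma> x y \<tau> * I)) = ?P"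
      by (simp only: mult.assoc)
  qed simp
  also have "\<dots> \<longleftrightarrow> ?P" using ne by blast
  finally show ?thesis
    unfolding const_steady_state_def incid_def I_def[symmetric] by simp
qed

theorem theorem5p1:
  fixes \<Gamma> :: "real \<Rightarrow> real \<Rightarrow> real \<Rightarrow> real"
    and \<alpha> \<beta> d h \<kappa> d1 d2 \<tau> b :: real
  assumes pos: "\<alpha> > 0" "\<beta> > 0" "d > 0" "h > 0" "\<kappa> > 0" "d1 > 0" "d2 > 0" "\<tau> > 0"
    and Gamma_int: "\<And>x a. x \<in> {0..pi} \<Longrightarrow> a > 0 \<Longrightarrow>
                      ((\<lambda>y. \<Gamma> x y a) has_integral exp (- \<alpha> * a)) {0..pi}"
  defines "S \<equiv> {(U, V). const_steady_state \<Gamma> \<alpha> \<beta> d h \<kappa> b \<tau> U V}"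
  shows "(b \<le> 0 \<longrightarrow> S = {(0, 0)})
       \<and> (b > 0 \<and> b * \<beta> / (\<alpha> * d * exp (\<alpha> * \<tau>)) \<le> 1 \<longrightarrow> S = {(0, 0), (b / d, 0)})
       \<and> (b * \<beta> / (\<alpha> * d * exp (\<alpha> * \<tau>)) > 1 \<longrightarrow>
            (\<exists>U3 V3. U3 > 0 \<and> V3 > 0 \<and> S = {(0, 0), (b / d, 0), (U3, V3)}))"
proof -
  define E where "E = exp (\<alpha> * \<tau>)"
  have E1: "E \<ge> 1" unfolding E_def using pos by simp
  define c where "c = \<alpha> * E / \<beta>"
  define F where "F = (\<lambda>V. b - d * c * (1 + h * V) - \<beta> * V / (1 + h * V) - (E - 1) * V / \<kappa>)"
  have c0: "c > 0" unfolding c_def using pos E1 by simp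
  have dc0: "d * c > 0" using c0 pos by simp
  have key: "const_steady_state \<Gamma> \<alpha> \<beta> d h \<kappa> b \<tau> U V \<longleftrightarrow>
     (U = 0 \<and> V = 0) \<or> (V = 0 \<and> b > 0 \<and> U = b / d) \<or> (V > 0 \<and> F V = 0 \<and> U = c * (1 + h * V))" for U V
    apply (subst css_iff[OF pos(1) pos(8) Gamma_int])
      apply assumption
     apply assumption
    apply (unfold E_def[symmetric] c_def F_def)
    by (rule alg[OF pos(1-5) E1])
  have Sdef: "S = {(U, V). (U = 0 \<and> V = 0) \<or> (V = 0 \<and> b > 0 \<and> U = b / d) \<or> (V > 0 \<and> F V = 0 \<and> U = c * (1 + h * V))}"
    unfolding S_def key ..
  have F0: "F 0 = b - d * c" unfolding F_def by simp
  have Fm: "F y < F x" if "0 \<le> x" "x < y" for x y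
    unfolding F_def using F_mono[OF pos(2) dc0 pos(4) pos(5) E1 that, of b] by (simp add: mult.assoc)
  have cond: "b * \<beta> / (\<alpha> * d * E) \<le> 1 \<longleftrightarrow> b \<le> d * c"
    unfolding c_def using pos E1 by (simp add: field_simps)
  have noroot: "V > 0 \<Longrightarrow> F V \<noteq> 0" if "b \<le> d * c" for V
    using Fm[of 0 V] F0 that by simp
  show ?thesis
  proof (intro conjI impI)
    assume b: "b \<le> 0"
    then have "b \<le> d * c" using dc0 by simp
    then have bc: "b \<le> d * c" .
    show "S = {(0, 0)}"
    proof (rule set_eqI)
      fix p :: "real \<times> real"
      obtain U V where p: "p = (U, V)" by (cases p)
      have "((U = 0 \<and> V = 0) \<or> (V = 0 \<and> b > 0 \<and> U = b / d) \<or> (V > 0 \<and> F V = 0 \<and> U = c * (1 + h * V)))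
            \<longleftrightarrow> U = 0 \<and> V = 0"
        using noroot[OF bc, of V] b by auto
      then show "p \<in> S \<longleftrightarrow> p \<in> {(0, 0)}" unfolding Sdef p by simp
    qed
  next
    assume b: "b > 0 \<and> b * \<beta> / (\<alpha> * d * exp (\<alpha> * \<tau>)) \<le> 1"
    then have "b \<le> d * c" using cond unfolding E_def by simp
    then have bc: "b \<le> d * c" .
    show "S = {(0, 0), (b / d, 0)}"
    proof (rule set_eqI)
      fix p :: "real \<times> real"
      obtain U V where p: "p = (U, V)" by (cases p)
      have "((U = 0 \<and> V = 0) \<or> (V = 0 \<and> b > 0 \<and> U = b / d) \<or> (V > 0 \<and> F V = 0 \<and> U = c * (1 + h * V)))
            \<longleftrightarrow> (U = 0 \<and> V = 0) \<or> (U = b / d \<and> V = 0)"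
        using noroot[OF bc, of V] b by auto
      then show "p \<in> S \<longleftrightarrow> p \<in> {(0, 0), (b / d, 0)}" unfolding Sdef p by simp
    qed
  next
    assume "b * \<beta> / (\<alpha> * d * exp (\<alpha> * \<tau>)) > 1"
    then have b: "b > d * c" using cond unfolding E_def by simp
    define M where "M = (b - d * c) / (d * c * h) + 1"
    have "(b - d * c) / (d * c * h) > 0" using b dc0 pos by simp
    then have M0: "M > 0" unfolding M_def by simp
    have "d * c * h \<noteq> 0" using c0 pos by simp
    then have "d * c * h * M = b - d * c + d * c * h" unfolding M_def by (simp add: distrib_left)
    moreover have "\<beta> * M / (1 + h * M) \<ge> 0" using M0 pos by simp
    moreover have "(E - 1) * M / \<kappa> \<ge> 0" using M0 pos E1 by simp
    moreover have "F M = b - (d * c + d * c * h * M) - \<beta> * M / (1 + h * M) - (E - 1) * M / \<kappa>"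
      unfolding F_def by (simp add: algebra_simps)
    moreover have "d * c * h > 0" using dc0 pos by simp
    ultimately have FM: "F M < 0" by linarith
    have cont: "continuous_on {0..M} F"
      unfolding F_def
    proof (intro continuous_intros ballI)
      fix x assume "x \<in> {0..M}"
      then have "h * x \<ge> 0" using pos by simp
      then show "1 + h * x \<noteq> 0" by simp
    qed (use pos in simp)
    obtain V3 where V3: "0 \<le> V3" "V3 \<le> M" "F V3 = 0"
    proof -
      have "F M \<le> 0" using FM by simp
      moreover have "0 \<le> F 0" using F0 b by simp
      moreover have "0 \<le> M" using M0 by simp
      ultimately have "\<exists>x. 0 \<le> x \<and> x \<le> M \<and> F x = 0" by (rule IVT2'[OF _ _ _ cont])
      then show ?thesis using that by blast
    qed
    have V3p: "V3 > 0" using V3 F0 b by (cases "V3 = 0") auto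
    have uniq: "V = V3" if "V > 0" "F V = 0" for V
    proof (rule ccontr)
      assume "V \<noteq> V3"
      then have "V < V3 \<or> V3 < V" by linarith
      then show False using Fm[of V V3] Fm[of V3 V] that V3 V3p by force
    qed
    have "b > 0" using b dc0 by simp
    show "\<exists>U3 V3. U3 > 0 \<and> V3 > 0 \<and> S = {(0, 0), (b / d, 0), (U3, V3)}"
    proof (intro exI conjI)
      show "c * (1 + h * V3) > 0" using c0 V3p pos by (simp add: add_pos_nonneg)
      show "V3 > 0" by (rule V3p)
      show "S = {(0, 0), (b / d, 0), (c * (1 + h * V3), V3)}"
      proof (rule set_eqI)
        fix p :: "real \<times> real"
        obtain U V where p: "p = (U, V)" by (cases p)
        have "((U = 0 \<and> V = 0) \<or> (V = 0 \<and> b > 0 \<and> U = b / d) \<or> (V > 0 \<and> F V = 0 \<and> U = c * (1 + h * V)))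
            \<longleftrightarrow> (U = 0 \<and> V = 0) \<or> (U = b / d \<and> V = 0) \<or> (U = c * (1 + h * V3) \<and> V = V3)"
          using uniq[of V] V3 V3p \<open>b > 0\<close> by auto
        then show "p \<in> S \<longleftrightarrow> p \<in> {(0, 0), (b / d, 0), (c * (1 + h * V3), V3)}" unfolding Sdef p by simp
      qed
    qed
  qed
qed

end
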